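(* Let $\theta\in[0,1]$ and $\Delta t,\Delta x>0$ satisfy $\Delta t(1-2\theta)\le\frac{\Delta x^3}{4}$. Then for every sequence $a\in\ell^2_\Delta(\mathbb Z)$, $$\|\mathcal A_{-(1-\theta)}a\|^2_{\ell^2_\Delta}\le\|\mathcal A_\theta a\|^2_{\ell^2_\Delta}.$$
   Context: For a sequence $a=(a_j)_{j\in\mathbb Z}$: $D_+(a)_j=(a_{j+1}-a_j)/\Delta x$, $D_-(a)_j=(a_j-a_{j-1})/\Delta x$; $\|a\|_{\ell^2_\Delta}=(\Delta x\sum_j a_j^2)^{1/2}$. For $\alpha\in\mathbb R$, $\mathcal A_\alpha=I+\alpha\Delta tD_+D_+D_-$; thus $\mathcal A_{-(1-\theta)}=I-(1-\theta)\Delta tD_+D_+D_-$. *)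

theory Defs
  imports "HOL-Analysis.Analysis"
begin

definition Dplus :: "real \<Rightarrow> (int \<Rightarrow> real) \<Rightarrow> (int \<Rightarrow> real)" where
  "Dplus dx a = (\<lambda>j. (a (j + 1) - a j) / dx)"

definition Dminus :: "real \<Rightarrow> (int \<Rightarrow> real) \<Rightarrow> (int \<Rightarrow> real)" where
  "Dminus dx a = (\<lambda>j. (a j - a (j - 1)) / dx)"

text \<open>Membership in l^2 over the integers (the weight dx does not affect membership).\<close>
definition in_l2 :: "(int \<Rightarrow> real) \<Rightarrow> bool" where
  "in_l2 a \<longleftrightarrow> (\<lambda>j. (a j)^2) summable_on UNIV"

definition l2_norm_sq :: "real \<Rightarrow> (int \<Rightarrow> real) \<Rightarrow> real" where
  "l2_norm_sq dx a = dx * (\<Sum>\<^sub>\<infinity>j\<in>UNIV. (a j)^2)"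

definition Aop :: "real \<Rightarrow> real \<Rightarrow> real \<Rightarrow> (int \<Rightarrow> real) \<Rightarrow> (int \<Rightarrow> real)" where
  "Aop alpha dt dx a = (\<lambda>j. a j + alpha * dt * Dplus dx (Dplus dx (Dminus dx a)) j)"

end

theory Submission
  imports Defs
begin

lemma bij_shift: "bij_betw (\<lambda>j::int. j + k) UNIV UNIV"
  by (rule bij_betwI[where g="\<lambda>j. j - k"]) auto

lemma l2_shift: "in_l2 a \<Longrightarrow> in_l2 (\<lambda>j. a (j + k))"
  unfolding in_l2_def
  using summable_on_reindex_bij_betw[OF bij_shift, of "\<lambda>j. (a j)^2" k] by simp

lemma sum_shift: "infsum (\<lambda>j::int. f (j + k)) UNIV = infsum f UNIV"
  using infsum_reindex_bij_betw[OF bij_shift, of f k] by simp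

lemma summable_cmp:
  fixes f g :: "'a \<Rightarrow> real"
  assumes "g summable_on A" "\<And>x. \<bar>f x\<bar> \<le> g x"
  shows "f summable_on A"
proof -
  have "Infinite_Sum.abs_summable_on g A" using assms(1) summable_on_iff_abs_summable_on_real by blast
  then have "Infinite_Sum.abs_summable_on f A"
    by (rule Infinite_Sum.abs_summable_on_comparison_test)
      (metis assms(2) abs_ge_self order_trans real_norm_def)
  then show ?thesis using summable_on_iff_abs_summable_on_real by blast
qed

lemma l2_prod:
  assumes "in_l2 a" "in_l2 b"
  shows "(\<lambda>j. a j * b j) summable_on UNIV"
proof (rule summable_cmp)
  show "(\<lambda>j. (a j)^2 + (b j)^2) summable_on UNIV"
    using assms unfolding in_l2_def by (rule summable_on_add)
  fix j
  have "0 \<le> (\<bar>a j\<bar> - \<bar>b j\<bar>)^2" by simp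
  then have "2 * (\<bar>a j\<bar> * \<bar>b j\<bar>) \<le> \<bar>a j\<bar>^2 + \<bar>b j\<bar>^2"
    by (simp add: power2_eq_square algebra_simps)
  moreover have "0 \<le> \<bar>a j\<bar> * \<bar>b j\<bar>" by simp
  ultimately show "\<bar>a j * b j\<bar> \<le> (a j)^2 + (b j)^2"
    by (simp only: abs_mult power2_abs)
qed

lemma l2_lin:
  assumes "in_l2 a" "in_l2 b"
  shows "in_l2 (\<lambda>j. c * a j + d * b j)"
  unfolding in_l2_def
proof (rule summable_cmp)
  show "(\<lambda>j. (2*c^2) * (a j)^2 + (2*d^2) * (b j)^2) summable_on UNIV"
    using assms unfolding in_l2_def
    by (intro summable_on_add summable_on_cmult_right)
  fix j
  have "0 \<le> (c * a j - d * b j)^2" by simp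
  then have "(c * a j + d * b j)^2 \<le> (2*c^2) * (a j)^2 + (2*d^2) * (b j)^2"
    by (simp add: power2_eq_square algebra_simps)
  then have "(c * a j + d * b j)^2 \<le> (2*c^2) * (a j)^2 + (2*d^2) * (b j)^2"
    by (simp add: power2_eq_square algebra_simps)
  then show "\<bar>(c * a j + d * b j)^2\<bar> \<le> (2*c^2) * (a j)^2 + (2*d^2) * (b j)^2"
    by simp
qed

lemma l2_Dplus: "in_l2 a \<Longrightarrow> in_l2 (Dplus dx a)"
proof -
  assume a: "in_l2 a"
  have "in_l2 (\<lambda>j. (1/dx) * a (j+1) + (-1/dx) * a j)"
    by (rule l2_lin[OF l2_shift[OF a] a])
  moreover have "(\<lambda>j. (1/dx) * a (j+1) + (-1/dx) * a j) = Dplus dx a"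
    unfolding Dplus_def by (auto simp: field_simps diff_divide_distrib)
  ultimately show ?thesis by simp
qed

lemma l2_Dminus: "in_l2 a \<Longrightarrow> in_l2 (Dminus dx a)"
proof -
  assume a: "in_l2 a"
  have "in_l2 (\<lambda>j. (1/dx) * a j + (-1/dx) * a (j + -1))"
    by (rule l2_lin[OF a l2_shift[OF a]])
  moreover have "(\<lambda>j. (1/dx) * a j + (-1/dx) * a (j + -1)) = Dminus dx a"
    unfolding Dminus_def by (auto simp: field_simps diff_divide_distrib)
  ultimately show ?thesis by simp
qed

lemma hs_lin:
  fixes f g :: "'a \<Rightarrow> real"
  assumes "(f has_sum x) A" "(g has_sum y) A"
  shows "((\<lambda>j. c * f j + d * g j) has_sum (c*x + d*y)) A"
  using assms by (intro has_sum_add has_sum_cmult_right)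

lemma hs_lin3:
  fixes f g h :: "'a \<Rightarrow> real"
  assumes "(f has_sum x) A" "(g has_sum y) A" "(h has_sum z) A"
  shows "((\<lambda>j. c * f j + d * g j + e * h j) has_sum (c*x + d*y + e*z)) A"
  using assms by (intro has_sum_add has_sum_cmult_right)

theorem proposition5:
  fixes \<theta> dt dx :: real and a :: "int \<Rightarrow> real"
  assumes "0 \<le> \<theta>" and "\<theta> \<le> 1"
    and "dt > 0" and "dx > 0"
    and "dt * (1 - 2 * \<theta>) \<le> dx ^ 3 / 4"
    and "in_l2 a"
  shows "l2_norm_sq dx (Aop (-(1 - \<theta>)) dt dx a) \<le> l2_norm_sq dx (Aop \<theta> dt dx a)"
proof -
  note a = assms(6)
  define w where "w = Dminus dx a"
  define v where "v = Dplus dx w"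
  define L where "L = Dplus dx v"
  have w: "in_l2 w" unfolding w_def by (rule l2_Dminus[OF a])
  have v: "in_l2 v" unfolding v_def by (rule l2_Dplus[OF w])
  have L: "in_l2 L" unfolding L_def by (rule l2_Dplus[OF v])
  have Lj: "L j = (v (j+1) - v j) / dx" for j unfolding L_def Dplus_def by simp
  have vj: "v j = (w (j+1) - w j) / dx" for j unfolding v_def Dplus_def by simp
  have wj: "w j = (a j - a (j - 1)) / dx" for j unfolding w_def Dminus_def by simp
  define S where "S f = infsum f (UNIV::int set)" for f :: "int \<Rightarrow> real"
  have hs: "(f has_sum S f) UNIV" if "f summable_on UNIV" for f
    using that unfolding S_def by simp
  have dx0: "dx \<noteq> 0" using assms(4) by simp
  have X3: "S (\<lambda>j. a (j - 1) * v j) = S (\<lambda>j. a j * v (j+1))"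
    unfolding S_def using sum_shift[of "\<lambda>j. a (j - 1) * v j" 1] by simp
  have s1: "(\<lambda>j. a j * v (j+1)) summable_on UNIV" by (rule l2_prod[OF a l2_shift[OF v]])
  have s2: "(\<lambda>j. a j * v j) summable_on UNIV" by (rule l2_prod[OF a v])
  have s3: "(\<lambda>j. a (j + -1) * v j) summable_on UNIV" by (rule l2_prod[OF l2_shift[OF a] v])
  have "((\<lambda>j. (1/dx) * (a j * v (j+1)) + (-1/dx) * (a j * v j)) has_sum
        ((1/dx) * S (\<lambda>j. a j * v (j+1)) + (-1/dx) * S (\<lambda>j. a j * v j))) UNIV"
    by (rule hs_lin[OF hs[OF s1] hs[OF s2]])
  then have "((\<lambda>j. a j * L j) has_sum
        ((1/dx) * S (\<lambda>j. a j * v (j+1)) + (-1/dx) * S (\<lambda>j. a j * v j))) UNIV"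
    by (rule has_sum_cong[THEN iffD1, rotated]) (simp add: Lj field_simps dx0)
  then have aL: "S (\<lambda>j. a j * L j) = (1/dx) * S (\<lambda>j. a j * v (j+1)) + (-1/dx) * S (\<lambda>j. a j * v j)"
    unfolding S_def by (rule infsumI)
  have "((\<lambda>j. (1/dx) * (a j * v j) + (-1/dx) * (a (j + -1) * v j)) has_sum
        ((1/dx) * S (\<lambda>j. a j * v j) + (-1/dx) * S (\<lambda>j. a (j + -1) * v j))) UNIV"
    by (rule hs_lin[OF hs[OF s2] hs[OF s3]])
  then have "((\<lambda>j. w j * v j) has_sum
        ((1/dx) * S (\<lambda>j. a j * v j) + (-1/dx) * S (\<lambda>j. a (j + -1) * v j))) UNIV"
    by (rule has_sum_cong[THEN iffD1, rotated]) (simp add: wj field_simps dx0)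
  then have wv: "S (\<lambda>j. w j * v j) = (1/dx) * S (\<lambda>j. a j * v j) + (-1/dx) * S (\<lambda>j. a (j + -1) * v j)"
    unfolding S_def by (rule infsumI)
  have step1a: "S (\<lambda>j. a j * L j) = - S (\<lambda>j. w j * v j)"
    using aL wv X3 by (simp add: algebra_simps)
  have t1: "(\<lambda>j. w j * w (j+1)) summable_on UNIV" by (rule l2_prod[OF w l2_shift[OF w]])
  have t2: "(\<lambda>j. w j ^ 2) summable_on UNIV" using w unfolding in_l2_def .
  have t3: "(\<lambda>j. w (j+1) ^ 2) summable_on UNIV" using l2_shift[OF w] unfolding in_l2_def .
  have W3: "S (\<lambda>j. w (j+1) ^ 2) = S (\<lambda>j. w j ^ 2)"
    unfolding S_def using sum_shift[of "\<lambda>j. w j ^ 2" 1] by simp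
  have "((\<lambda>j. (1/dx) * (w j * w (j+1)) + (-1/dx) * (w j ^ 2)) has_sum
        ((1/dx) * S (\<lambda>j. w j * w (j+1)) + (-1/dx) * S (\<lambda>j. w j ^ 2))) UNIV"
    by (rule hs_lin[OF hs[OF t1] hs[OF t2]])
  then have "((\<lambda>j. w j * v j) has_sum
        ((1/dx) * S (\<lambda>j. w j * w (j+1)) + (-1/dx) * S (\<lambda>j. w j ^ 2))) UNIV"
    by (rule has_sum_cong[THEN iffD1, rotated]) (simp add: vj field_simps dx0 power2_eq_square)
  then have wv2: "S (\<lambda>j. w j * v j) = (1/dx) * S (\<lambda>j. w j * w (j+1)) + (-1/dx) * S (\<lambda>j. w j ^ 2)"
    unfolding S_def by (rule infsumI)
  have "((\<lambda>j. (1/dx^2) * (w (j+1) ^ 2) + (-2/dx^2) * (w j * w (j+1)) + (1/dx^2) * (w j ^ 2)) has_sum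
        ((1/dx^2) * S (\<lambda>j. w (j+1) ^ 2) + (-2/dx^2) * S (\<lambda>j. w j * w (j+1)) + (1/dx^2) * S (\<lambda>j. w j ^ 2))) UNIV"
    by (rule hs_lin3[OF hs[OF t3] hs[OF t1] hs[OF t2]])
  then have "((\<lambda>j. v j ^ 2) has_sum
        ((1/dx^2) * S (\<lambda>j. w (j+1) ^ 2) + (-2/dx^2) * S (\<lambda>j. w j * w (j+1)) + (1/dx^2) * S (\<lambda>j. w j ^ 2))) UNIV"
    by (rule has_sum_cong[THEN iffD1, rotated]) (simp add: vj field_simps dx0 power2_eq_square)
  then have vv: "S (\<lambda>j. v j ^ 2) = (1/dx^2) * S (\<lambda>j. w (j+1) ^ 2) + (-2/dx^2) * S (\<lambda>j. w j * w (j+1)) + (1/dx^2) * S (\<lambda>j. w j ^ 2)"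
    unfolding S_def by (rule infsumI)
  have e1: "dx * S (\<lambda>j. w j * v j) = S (\<lambda>j. w j * w (j+1)) - S (\<lambda>j. w j ^ 2)"
    using wv2 dx0 by (simp add: field_simps)
  have e2: "dx^2 * S (\<lambda>j. v j ^ 2) = 2 * S (\<lambda>j. w j ^ 2) - 2 * S (\<lambda>j. w j * w (j+1))"
    using vv W3 dx0 by (simp add: field_simps)
  have "dx * (dx * S (\<lambda>j. v j ^ 2)) = dx * (-2 * S (\<lambda>j. w j * v j))"
    using e1 e2 by (simp add: power2_eq_square algebra_simps)
  then have "dx * (dx * S (\<lambda>j. v j ^ 2) + 2 * S (\<lambda>j. w j * v j)) = 0"
    by (simp add: algebra_simps)
  then have "dx * S (\<lambda>j. v j ^ 2) + 2 * S (\<lambda>j. w j * v j) = 0" using dx0 by simp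
  then have "dx * S (\<lambda>j. v j ^ 2) = -2 * S (\<lambda>j. w j * v j)" by linarith
  then have step1: "S (\<lambda>j. a j * L j) = (dx/2) * S (\<lambda>j. v j ^ 2)"
    using step1a by simp
  have u1: "(\<lambda>j. v (j+1) ^ 2) summable_on UNIV" using l2_shift[OF v] unfolding in_l2_def .
  have u2: "(\<lambda>j. v j ^ 2) summable_on UNIV" using v unfolding in_l2_def .
  have uL: "(\<lambda>j. L j ^ 2) summable_on UNIV" using L unfolding in_l2_def .
  have V3: "S (\<lambda>j. v (j+1) ^ 2) = S (\<lambda>j. v j ^ 2)"
    unfolding S_def using sum_shift[of "\<lambda>j. v j ^ 2" 1] by simp
  have "S (\<lambda>j. L j ^ 2) \<le> (2/dx^2) * S (\<lambda>j. v (j+1) ^ 2) + (2/dx^2) * S (\<lambda>j. v j ^ 2)"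
  proof (rule has_sum_mono[OF hs[OF uL] hs_lin[OF hs[OF u1] hs[OF u2]]])
    fix j :: int
    have "0 \<le> (v (j+1) + v j)^2" by simp
    then have "(v (j+1) - v j)^2 \<le> 2 * v (j+1) ^ 2 + 2 * v j ^ 2"
      by (simp add: power2_eq_square algebra_simps)
    then have "(v (j+1) - v j)^2 / dx^2 \<le> (2 * v (j+1) ^ 2 + 2 * v j ^ 2) / dx^2"
      by (rule divide_right_mono) simp
    then show "L j ^ 2 \<le> (2/dx^2) * v (j+1) ^ 2 + (2/dx^2) * v j ^ 2"
      by (simp add: Lj power_divide add_divide_distrib)
  qed
  then have step2: "S (\<lambda>j. L j ^ 2) \<le> (4/dx^2) * S (\<lambda>j. v j ^ 2)" using V3 by simp
  have Vnn: "0 \<le> S (\<lambda>j. v j ^ 2)" unfolding S_def by (rule infsum_nonneg) simp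
  have Lnn: "0 \<le> S (\<lambda>j. L j ^ 2)" unfolding S_def by (rule infsum_nonneg) simp
  define B where "B = Aop (-(1 - \<theta>)) dt dx a"
  define A where "A = Aop \<theta> dt dx a"
  have Bj: "B j = a j - (1-\<theta>) * dt * L j" for j unfolding B_def Aop_def L_def v_def w_def by (simp add: algebra_simps)
  have Aj: "A j = a j + \<theta> * dt * L j" for j unfolding A_def Aop_def L_def v_def w_def by simp
  have Bl2: "in_l2 B"
  proof -
    have "in_l2 (\<lambda>j. 1 * a j + (-(1-\<theta>) * dt) * L j)" by (rule l2_lin[OF a L])
    moreover have "(\<lambda>j. 1 * a j + (-(1-\<theta>) * dt) * L j) = B"
      by (rule ext) (simp add: Bj algebra_simps)
    ultimately show ?thesis by simp
  qed
  have r1: "(\<lambda>j. B j ^ 2) summable_on UNIV" using Bl2 unfolding in_l2_def .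
  have r2: "(\<lambda>j. a j * L j) summable_on UNIV" by (rule l2_prod[OF a L])
  have "((\<lambda>j. 1 * B j ^ 2 + (2*dt) * (a j * L j) + ((2*\<theta>-1)*dt^2) * L j ^ 2) has_sum
        (1 * S (\<lambda>j. B j ^ 2) + (2*dt) * S (\<lambda>j. a j * L j) + ((2*\<theta>-1)*dt^2) * S (\<lambda>j. L j ^ 2))) UNIV"
    by (rule hs_lin3[OF hs[OF r1] hs[OF r2] hs[OF uL]])
  then have "((\<lambda>j. A j ^ 2) has_sum
        (1 * S (\<lambda>j. B j ^ 2) + (2*dt) * S (\<lambda>j. a j * L j) + ((2*\<theta>-1)*dt^2) * S (\<lambda>j. L j ^ 2))) UNIV"
    by (rule has_sum_cong[THEN iffD1, rotated]) (simp add: Aj Bj power2_eq_square algebra_simps)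
  then have AB: "S (\<lambda>j. A j ^ 2) = S (\<lambda>j. B j ^ 2) + (2*dt) * S (\<lambda>j. a j * L j) + ((2*\<theta>-1)*dt^2) * S (\<lambda>j. L j ^ 2)"
    unfolding S_def by (simp add: infsumI)
  define V where "V = S (\<lambda>j. v j ^ 2)"
  define Q where "Q = S (\<lambda>j. L j ^ 2)"
  have key: "0 \<le> (2*dt) * ((dx/2) * V) + ((2*\<theta>-1)*dt^2) * Q"
  proof (cases "2*\<theta> - 1 \<ge> 0")
    case True
    then show ?thesis using assms(3,4) Vnn Lnn unfolding V_def Q_def by simp
  next
    case False
    have c: "(1-2*\<theta>) * dt * 4 \<le> dx^3" using assms(5) by (simp add: algebra_simps)
    have "(1-2*\<theta>)*dt^2 * Q \<le> (1-2*\<theta>)*dt^2 * ((4/dx^2) * V)"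
      using step2 False unfolding V_def Q_def by (intro mult_left_mono) auto
    also have "\<dots> = dt * (((1-2*\<theta>) * dt * 4) * V / dx^2)" by (simp add: power2_eq_square)
    also have "\<dots> \<le> dt * (dx^3 * V / dx^2)"
      using c Vnn assms(3) unfolding V_def by (intro mult_left_mono divide_right_mono mult_right_mono) auto
    also have "\<dots> = dt * dx * V" using dx0 by (simp add: power2_eq_square power3_eq_cube)
    finally show ?thesis by (simp add: algebra_simps)
  qed
  have "S (\<lambda>j. B j ^ 2) \<le> S (\<lambda>j. A j ^ 2)"
    using AB key step1 unfolding V_def Q_def by simp
  then show ?thesis
    unfolding l2_norm_sq_def A_def[symmetric] B_def[symmetric] S_def
    using assms(4) by (simp add: mult_left_mono)
qed

end
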